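(* Let $K$ be a compact Hausdorff space and let $p\in K$ be a non-$P$-point of $K$, i.e. there exists $g\in C(K)$ which is not constant on any open neighbourhood of $p$. Then the Banach space $C(K,p)=\{f\in C(K): f(p)=0\}$ (with the sup norm) fails the ball fixed point property.
   Context: $C(K)$ is the real Banach space of continuous functions on $K$ with the sup norm. A real Banach space $X$ has the ball fixed point property (BFPP) if every nonexpansive map $T\colon B_X\to B_X$ (i.e. $\|Tx-Ty\|\le\|x-y\|$) has a fixed point, where $B_X$ is the closed unit ball. *)

theory Defs
  imports "HOL-Analysis.Analysis"
begin

text \<open>Elements of C(K) are represented by functions 'a => real that are continuous
  on X; values outside topspace X are irrelevant.\<close>
definition sup_norm :: "'a topology \<Rightarrow> ('a \<Rightarrow> real) \<Rightarrow> real" where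
  "sup_norm X f = Sup ((\<lambda>x. \<bar>f x\<bar>) ` topspace X)"

definition CKp_ball :: "'a topology \<Rightarrow> 'a \<Rightarrow> ('a \<Rightarrow> real) set" where
  "CKp_ball X p = {f. continuous_map X euclideanreal f \<and> f p = 0 \<and> sup_norm X f \<le> 1}"

definition non_P_point :: "'a topology \<Rightarrow> 'a \<Rightarrow> bool" where
  "non_P_point X p \<longleftrightarrow> (\<exists>g. continuous_map X euclideanreal g \<and>
      (\<forall>U. openin X U \<and> p \<in> U \<longrightarrow> (\<exists>x\<in>U. \<exists>y\<in>U. g x \<noteq> g y)))"

definition CKp_BFPP :: "'a topology \<Rightarrow> 'a \<Rightarrow> bool" where
  "CKp_BFPP X p \<longleftrightarrow>
     (\<forall>T. T ` CKp_ball X p \<subseteq> CKp_ball X p \<and>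
          (\<forall>f\<in>CKp_ball X p. \<forall>h\<in>CKp_ball X p. sup_norm X (\<lambda>x. T f x - T h x) \<le> sup_norm X (\<lambda>x. f x - h x))
        \<longrightarrow> (\<exists>f\<in>CKp_ball X p. \<forall>x\<in>topspace X. T f x = f x))"

end

theory Submission
  imports Defs
begin

lemma min1_abs_diff: "\<bar>min 1 (a::real) - min 1 b\<bar> \<le> \<bar>a - b\<bar>"
  unfolding min_def by auto

lemma min1_bound: "\<bar>a::real\<bar> \<le> 1 \<Longrightarrow> c \<ge> 0 \<Longrightarrow> \<bar>min 1 (a + c)\<bar> \<le> 1"
  unfolding min_def by auto

lemma min1_fix: "min 1 (a + c) = (a::real) \<Longrightarrow> c > 0 \<Longrightarrow> a = 1"
  unfolding min_def by (auto split: if_splits)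

lemma bdd_abs_img:
  assumes "compact_space X" "continuous_map X euclideanreal f"
  shows "bdd_above ((\<lambda>x. \<bar>f x\<bar>) ` topspace X)"
proof -
  have "compactin X (topspace X)" using assms(1) by (simp add: compact_space_def)
  then have "compactin euclideanreal (f ` topspace X)"
    by (rule image_compactin[OF _ assms(2)])
  then have "bounded (f ` topspace X)" by (simp add: compact_imp_bounded)
  then obtain B where "\<forall>y\<in>f ` topspace X. \<bar>y\<bar> \<le> B" by (auto simp: bounded_real)
  then show ?thesis by (auto intro!: bdd_aboveI[where M=B])
qed

theorem mainTheorem16:
  fixes X :: "'a topology" and p :: 'a
  assumes "compact_space X" and "Hausdorff_space X"
    and "p \<in> topspace X" and "non_P_point X p"
  shows "\<not> CKp_BFPP X p"
proof
  assume B: "CKp_BFPP X p"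
  obtain g where gc: "continuous_map X euclideanreal g"
    and gn: "\<And>U. openin X U \<Longrightarrow> p \<in> U \<Longrightarrow> \<exists>x\<in>U. \<exists>y\<in>U. g x \<noteq> g y"
    using assms(4) unfolding non_P_point_def by blast
  define h where "h x = min 1 \<bar>g x - g p\<bar>" for x
  have hc: "continuous_map X euclideanreal h"
    unfolding h_def by (intro continuous_intros gc)
  have h0: "h p = 0" by (simp add: h_def)
  have hge: "h x \<ge> 0" for x by (simp add: h_def)
  define T where "T f = (\<lambda>x. min 1 (f x + h x))" for f :: "'a \<Rightarrow> real"
  have ne: "topspace X \<noteq> {}" using assms(3) by blast
  have ballD: "\<bar>f x\<bar> \<le> 1" if "f \<in> CKp_ball X p" "x \<in> topspace X" for f x
  proof -
    have c: "continuous_map X euclideanreal f" and s: "sup_norm X f \<le> 1"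
      using that by (auto simp: CKp_ball_def)
    have "\<bar>f x\<bar> \<le> sup_norm X f"
      unfolding sup_norm_def
      by (rule cSUP_upper[OF that(2) bdd_abs_img[OF assms(1) c]])
    then show ?thesis using s by linarith
  qed
  have Tball: "T f \<in> CKp_ball X p" if f: "f \<in> CKp_ball X p" for f
  proof -
    have fc: "continuous_map X euclideanreal f" and fp: "f p = 0"
      using f by (auto simp: CKp_ball_def)
    have "continuous_map X euclideanreal (T f)"
      unfolding T_def by (intro continuous_intros fc hc)
    moreover have "T f p = 0" using fp h0 by (simp add: T_def)
    moreover have "sup_norm X (T f) \<le> 1"
      unfolding sup_norm_def
    proof (rule cSUP_least[OF ne])
      fix x assume "x \<in> topspace X"
      then have "\<bar>f x\<bar> \<le> 1" using ballD f by blast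
      then show "\<bar>T f x\<bar> \<le> 1" unfolding T_def using hge[of x] by (rule min1_bound)
    qed
    ultimately show ?thesis by (simp add: CKp_ball_def)
  qed
  have Tne: "sup_norm X (\<lambda>x. T f x - T k x) \<le> sup_norm X (\<lambda>x. f x - k x)"
    if f: "f \<in> CKp_ball X p" and k: "k \<in> CKp_ball X p" for f k
  proof -
    have "continuous_map X euclideanreal (\<lambda>x. f x - k x)"
      using f k unfolding CKp_ball_def by (intro continuous_map_diff) auto
    note bd = bdd_abs_img[OF assms(1) this]
    show ?thesis unfolding sup_norm_def
    proof (rule cSUP_mono[OF ne bd])
      fix n assume "n \<in> topspace X"
      moreover have "\<bar>T f n - T k n\<bar> \<le> \<bar>f n - k n\<bar>"
        unfolding T_def by (rule order_trans[OF min1_abs_diff]) simp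
      ultimately show "\<exists>m\<in>topspace X. \<bar>T f n - T k n\<bar> \<le> \<bar>f m - k m\<bar>"
        by blast
    qed
  qed
  have sub: "T ` CKp_ball X p \<subseteq> CKp_ball X p" using Tball by blast
  have "\<exists>f\<in>CKp_ball X p. \<forall>x\<in>topspace X. T f x = f x"
    using B unfolding CKp_BFPP_def
  proof (elim allE impE)
    show "T ` CKp_ball X p \<subseteq> CKp_ball X p \<and>
          (\<forall>f\<in>CKp_ball X p. \<forall>h\<in>CKp_ball X p. sup_norm X (\<lambda>x. T f x - T h x) \<le> sup_norm X (\<lambda>x. f x - h x))"
      using sub Tne by blast
  qed
  then obtain f where f: "f \<in> CKp_ball X p" and fx: "\<And>x. x \<in> topspace X \<Longrightarrow> T f x = f x"
    by blast
  have fc: "continuous_map X euclideanreal f" and fp: "f p = 0"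
    using f by (auto simp: CKp_ball_def)
  have one: "f x = 1" if "x \<in> topspace X" "g x \<noteq> g p" for x
  proof -
    have "h x > 0" using that(2) by (simp add: h_def)
    moreover have "min 1 (f x + h x) = f x" using fx[OF that(1)] by (simp add: T_def)
    ultimately show ?thesis using min1_fix by blast
  qed
  define U where "U = {x \<in> topspace X. f x \<in> {..<1/2}}"
  have "openin X U" unfolding U_def
    by (rule openin_continuous_map_preimage[OF fc]) simp
  moreover have "p \<in> U" using assms(3) fp by (simp add: U_def)
  ultimately obtain x y where xy: "x \<in> U" "y \<in> U" "g x \<noteq> g y" using gn by blast
  have small: "z \<in> topspace X" "f z < 1/2" if "z \<in> U" for z
    using that unfolding U_def by auto
  show False
  proof (cases "g x = g p")
    case True
    then have "g y \<noteq> g p" using xy(3) by simp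
    then have "f y = 1" using one small(1)[OF xy(2)] by blast
    then show False using small(2)[OF xy(2)] by simp
  next
    case False
    then have "f x = 1" using one small(1)[OF xy(1)] by blast
    then show False using small(2)[OF xy(1)] by simp
  qed
qed

end
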